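(* Let $n\ge1$ and suppose $\alpha>0$ and $T$ are real constants. Then for $s<t\le T$ and $|x|\le\sqrt{T-t}$, $$\int_{|y|<\sqrt{T-s}}\Phi(x-y,t-s)^{\alpha/n}\,dy\ge\frac{C}{(t-s)^{(\alpha-n)/2}},$$ where $C=C(n,\alpha)$ is a positive constant.
   Context: $\Phi$ is the heat kernel: $\Phi(x,t)=(4\pi t)^{-n/2}e^{-|x|^2/(4t)}$ for $t>0$ and $\Phi(x,t)=0$ for $t\le0$. *)

theory Defs
  imports "HOL-Analysis.Analysis"
begin

definition heat_kernel :: "'a::euclidean_space \<Rightarrow> real \<Rightarrow> real" where
  "heat_kernel x t =
     (if t > 0 then (4 * pi * t) powr (- real DIM('a) / 2) * exp (- (norm x)\<^sup>2 / (4 * t)) else 0)"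

end

theory Submission imports Defs begin
lemma cont_int_ball:
  fixes f :: "'a::euclidean_space \<Rightarrow> real"
  assumes "continuous_on UNIV f"
  shows "f integrable_on ball c r"
proof -
  obtain a where a: "ball c r \<subseteq> cbox (-a) a"
    using bounded_subset_cbox_symmetric bounded_ball by blast
  have "f absolutely_integrable_on cbox (-a) a"
    by (rule absolutely_integrable_continuous) (meson assms continuous_on_subset subset_UNIV)
  then have "f absolutely_integrable_on ball c r"
    by (rule set_integrable_subset[OF _ _ a]) auto
  then show ?thesis using absolutely_integrable_on_def by blast
qed

lemma const_ball: "integral (ball (z::'a::euclidean_space) \<rho>) (\<lambda>_. m) = m * measure lborel (ball z \<rho>)"
proof -
  have "((\<lambda>x. 1) has_integral measure lborel (ball z \<rho>)) (ball z \<rho>)"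
    by (rule has_integral_measure_lborel) (use emeasure_bounded_finite[of "ball z \<rho>"] in auto)
  from has_integral_mult_right[OF this, of m] show ?thesis
    by (simp add: integral_unique)
qed

lemma ball_choice:
  fixes x :: "'a::euclidean_space"
  assumes "\<tau> > 0" "\<tau> \<le> R" "norm x \<le> sqrt (R - \<tau>)"
  shows "\<exists>z. ball z (sqrt \<tau>) \<subseteq> ball 0 (sqrt R) \<and> (\<forall>y\<in>ball z (sqrt \<tau>). norm (x - y) \<le> 2 * sqrt \<tau>)"
proof (cases "norm x \<le> sqrt \<tau>")
  case True
  have "sqrt \<tau> \<le> sqrt R" using assms by simp
  show ?thesis
  proof (intro exI[of _ 0] conjI ballI subsetI)
    fix y assume "y \<in> ball (0::'a) (sqrt \<tau>)"
    then have d: "norm y < sqrt \<tau>" by simp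
    then show "y \<in> ball 0 (sqrt R)" using \<open>sqrt \<tau> \<le> sqrt R\<close> by (simp del: real_sqrt_le_iff)
    have "norm (x - y) \<le> norm x + norm y" by (rule norm_triangle_ineq4)
    then show "norm (x - y) \<le> 2 * sqrt \<tau>" using d True by simp
  qed
next
  case False
  let ?z = "x - (sqrt \<tau> / norm x) *\<^sub>R x"
  have nx: "norm x > 0" using False assms by (smt (verit) norm_ge_zero real_sqrt_ge_zero)
  have zeq: "?z = (1 - sqrt \<tau> / norm x) *\<^sub>R x" by (simp add: algebra_simps)
  have fac: "1 - sqrt \<tau> / norm x \<ge> 0" using False nx by (simp add: field_simps)
  have nz: "norm ?z = norm x - sqrt \<tau>"
    unfolding zeq using fac nx by (simp add: field_simps)
  have dxz: "norm (x - ?z) = sqrt \<tau>" using nx assms(1) by simp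
  have xR: "norm x < sqrt R" using assms(1,3)
    by (smt (verit) real_sqrt_less_iff)
  show ?thesis
  proof (intro exI[of _ ?z] conjI ballI subsetI)
    fix y assume "y \<in> ball ?z (sqrt \<tau>)"
    then have d: "norm (?z - y) < sqrt \<tau>" by (simp add: dist_norm)
    have "norm y \<le> norm ?z + norm (?z - y)" by (metis norm_minus_commute norm_triangle_sub)
    then show "y \<in> ball 0 (sqrt R)" using d nz xR by (simp add: dist_norm)
  next
    fix y assume "y \<in> ball ?z (sqrt \<tau>)"
    then have d: "norm (?z - y) < sqrt \<tau>" by (simp add: dist_norm)
    have "norm (x - y) \<le> norm (x - ?z) + norm (?z - y)" using norm_triangle_ineq[of "x - ?z" "?z - y"] by simp
    then show "norm (x - y) \<le> 2 * sqrt \<tau>" using d dxz by simp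
  qed
qed

theorem lemma2p10:
  fixes \<alpha> :: real
  assumes "\<alpha> > 0"
  shows "\<exists>C>0. \<forall>(T::real) s t (x::'a::euclidean_space).
           s < t \<and> t \<le> T \<and> norm x \<le> sqrt (T - t) \<longrightarrow>
           integral (ball 0 (sqrt (T - s)))
             (\<lambda>y. heat_kernel (x - y) (t - s) powr (\<alpha> / real DIM('a)))
           \<ge> C / (t - s) powr ((\<alpha> - real DIM('a)) / 2)"
proof -
  define n where "n = real DIM('a)"
  have n0: "n > 0" unfolding n_def by simp
  define C where "C = (4 * pi) powr (- \<alpha> / 2) * exp (- (\<alpha> / n)) * unit_ball_vol n"
  have C0: "C > 0" unfolding C_def using n0 by simp
  show ?thesis
  proof (intro exI[of _ C] conjI allI impI C0)
    fix T s t :: real and x :: 'a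
    assume H: "s < t \<and> t \<le> T \<and> norm x \<le> sqrt (T - t)"
    define \<tau> where "\<tau> = t - s"
    have tau0: "\<tau> > 0" using H unfolding \<tau>_def by simp
    have tauR: "\<tau> \<le> T - s" using H unfolding \<tau>_def by simp
    have xR: "norm x \<le> sqrt ((T - s) - \<tau>)" using H unfolding \<tau>_def by simp
    obtain z where z1: "ball z (sqrt \<tau>) \<subseteq> ball 0 (sqrt (T - s))"
      and z2: "\<forall>y\<in>ball z (sqrt \<tau>). norm (x - y) \<le> 2 * sqrt \<tau>"
      using ball_choice[OF tau0 tauR xR] by blast
    define p where "p = \<alpha> / n"
    have p0: "p > 0" unfolding p_def using n0 assms by simp
    define c0 where "c0 = (4 * pi * \<tau>) powr (- n / 2)"
    have c00: "c0 > 0" unfolding c0_def using tau0 by simp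
    define f where "f = (\<lambda>y. heat_kernel (x - y) \<tau> powr p)"
    have feq: "f = (\<lambda>y. (c0 * exp (- (norm (x - y))\<^sup>2 / (4 * \<tau>))) powr p)"
      unfolding f_def c0_def heat_kernel_def n_def using tau0 by simp
    have fc: "continuous_on UNIV f"
      unfolding feq using c00 tau0 by (intro continuous_intros) auto
    define m where "m = (c0 * exp (- 1)) powr p"
    have fm: "m \<le> f y" if "y \<in> ball z (sqrt \<tau>)" for y
    proof -
      have "norm (x - y) \<le> 2 * sqrt \<tau>" using z2 that by blast
      then have "(norm (x - y))\<^sup>2 \<le> (2 * sqrt \<tau>)\<^sup>2" by (intro power_mono) auto
      also have "\<dots> = 4 * \<tau>" using tau0 by (simp add: power_mult_distrib)
      finally have "- 1 \<le> - (norm (x - y))\<^sup>2 / (4 * \<tau>)" using tau0 by (simp add: field_simps)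
      then have "c0 * exp (- 1) \<le> c0 * exp (- (norm (x - y))\<^sup>2 / (4 * \<tau>))"
        using c00 by simp
      then show ?thesis unfolding m_def feq using p0 c00 by (intro powr_mono2) auto
    qed
    have "integral (ball z (sqrt \<tau>)) (\<lambda>_. m) \<le> integral (ball z (sqrt \<tau>)) f"
      by (rule integral_le) (use fm cont_int_ball[OF fc] cont_int_ball[of "\<lambda>_. m"] in auto)
    also have "\<dots> \<le> integral (ball 0 (sqrt (T - s))) f"
      by (rule integral_subset_le[OF z1 cont_int_ball[OF fc] cont_int_ball[OF fc]])
        (simp add: f_def)
    finally have I: "m * measure lborel (ball z (sqrt \<tau>)) \<le> integral (ball 0 (sqrt (T - s))) f"
      by (simp add: const_ball)
    have meas: "measure lborel (ball z (sqrt \<tau>)) = unit_ball_vol n * \<tau> powr (n / 2)"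
    proof -
      have "measure lborel (ball z (sqrt \<tau>)) = unit_ball_vol n * sqrt \<tau> ^ DIM('a)"
        unfolding n_def by (rule content_ball) (use tau0 in simp)
      also have "sqrt \<tau> ^ DIM('a) = \<tau> powr (n / 2)"
        using tau0 unfolding n_def
        by (simp add: powr_half_sqrt[symmetric] powr_power)
      finally show ?thesis .
    qed
    have mval: "m = (4 * pi) powr (- \<alpha> / 2) * \<tau> powr (- \<alpha> / 2) * exp (- (\<alpha> / n))"
      unfolding m_def c0_def p_def using tau0 n0
      by (simp add: powr_mult powr_powr exp_powr_real)
    have "C / \<tau> powr ((\<alpha> - n) / 2) = m * measure lborel (ball z (sqrt \<tau>))"
    proof -
      have e: "\<tau> powr (- \<alpha> / 2) * \<tau> powr (n / 2) = 1 / \<tau> powr ((\<alpha> - n) / 2)"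
        by (simp add: powr_add[symmetric] powr_minus_divide[symmetric] diff_divide_distrib)
      have "C / \<tau> powr ((\<alpha> - n) / 2) = C * (\<tau> powr (- \<alpha> / 2) * \<tau> powr (n / 2))"
        unfolding e by simp
      then show ?thesis unfolding meas mval C_def by (simp add: mult_ac)
    qed
    with I show "C / (t - s) powr ((\<alpha> - real DIM('a)) / 2)
       \<le> integral (ball 0 (sqrt (T - s))) (\<lambda>y. heat_kernel (x - y) (t - s) powr (\<alpha> / real DIM('a)))"
      unfolding f_def p_def n_def \<tau>_def by simp
  qed
qed
end
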